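(* Let $v=v_1\cdots v_n$ be a word of distinct positive integers avoiding $31425,32415,31524,32514$, with positions of left-to-right maxima $a_1<\dots<a_h$ and of right-to-left maxima $b_1<\dots<b_g$ ($a_1=1$, $a_h=b_1$, $b_g=n$). Assume $h>1$, $g>1$, $a_h>h$ and $v_{a_{h-1}}<v_{b_2}$. Then exactly one of the following holds: (A-1) $a_h=a_{h-1}+1$; (A-2) $a_h>a_{h-1}+1$ and $b_2=a_h+1$; (A-3) $a_h>a_{h-1}+1$, $b_2>a_h+1$, and $v_j>v_{a_{h-1}}$ for all $a_h<j<b_2$.
   Context: A word of distinct positive integers avoids a pattern $P$ (a permutation of $[m]$) if no subsequence of length $m$ is order-isomorphic to $P$. A left-to-right (resp. right-to-left) maximum of $v$ is a letter $v_i$ greater than all letters to its left (resp. right). *)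

theory Defs
  imports Main
begin

text \<open>Words are lists of naturals; positions are 1-indexed: letter i of v is v ! (i - 1).\<close>

definition letter :: "nat list \<Rightarrow> nat \<Rightarrow> nat" where
  "letter v i = v ! (i - 1)"

definition contains :: "nat list \<Rightarrow> nat list \<Rightarrow> bool" where
  "contains v P \<longleftrightarrow> (\<exists>idx. length idx = length P \<and> sorted_wrt (<) idx \<and>
      (\<forall>i\<in>set idx. i < length v) \<and>
      (\<forall>k<length P. \<forall>l<length P. (v ! (idx ! k) < v ! (idx ! l) \<longleftrightarrow> P ! k < P ! l)))"

definition avoids :: "nat list \<Rightarrow> nat list \<Rightarrow> bool" where
  "avoids v P \<longleftrightarrow> \<not> contains v P"

definition ltr_pos :: "nat list \<Rightarrow> nat set" where
  "ltr_pos v = {i. 1 \<le> i \<and> i \<le> length v \<and> (\<forall>j. 1 \<le> j \<and> j < i \<longrightarrow> letter v j < letter v i)}"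

definition rtl_pos :: "nat list \<Rightarrow> nat set" where
  "rtl_pos v = {i. 1 \<le> i \<and> i \<le> length v \<and> (\<forall>j. i < j \<and> j \<le> length v \<longrightarrow> letter v j < letter v i)}"

text \<open>a v k = a_k (1-indexed), the k-th smallest left-to-right maximum position; similarly b.\<close>
definition apos :: "nat list \<Rightarrow> nat \<Rightarrow> nat" where
  "apos v k = sorted_list_of_set (ltr_pos v) ! (k - 1)"

definition bpos :: "nat list \<Rightarrow> nat \<Rightarrow> nat" where
  "bpos v k = sorted_list_of_set (rtl_pos v) ! (k - 1)"

end

theory Submission
  imports Defs
begin



lemma all5: "(\<forall>k<Suc (Suc (Suc (Suc (Suc 0)))). P k) = (P 0 \<and> P 1 \<and> P 2 \<and> P 3 \<and> P (4::nat))"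
  by (auto simp: less_Suc_eq numeral_eq_Suc)
lemma pat:
  assumes "1\<le>i1" "i1<i2" "i2<i3" "i3<i4" "i4<i5" "i5 \<le> length v"
    and "letter v i2 < letter v i4" "letter v i4 < letter v i1" "letter v i1 < letter v i5" "letter v i5 < letter v i3"
  shows "contains v [3,1,5,2,4]"
  unfolding contains_def
  apply (rule exI[of _ "[i1-1,i2-1,i3-1,i4-1,i5-1]"])
  using assms unfolding letter_def
  apply (simp only: length_Cons list.size numeral_eq_Suc add_0 all5)
  apply (simp add: numeral_eq_Suc)
  apply arith
  done
lemma pat2:
  assumes "1\<le>i1" "i1<i2" "i2<i3" "i3<i4" "i4<i5" "i5 \<le> length v"
    and "letter v i4 < letter v i2" "letter v i2 < letter v i1" "letter v i1 < letter v i5" "letter v i5 < letter v i3"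
  shows "contains v [3,2,5,1,4]"
  unfolding contains_def
  apply (rule exI[of _ "[i1-1,i2-1,i3-1,i4-1,i5-1]"])
  using assms unfolding letter_def
  apply (simp only: length_Cons list.size numeral_eq_Suc add_0 all5)
  apply (simp add: numeral_eq_Suc)
  apply arith
  done
lemma distinct_letter:
  assumes "distinct v" "1 \<le> i" "i \<le> length v" "1 \<le> j" "j \<le> length v" "i \<noteq> j"
  shows "letter v i \<noteq> letter v j"
  using assms unfolding letter_def by (simp add: nth_eq_iff_index_eq)

theorem lemma3p9:
  fixes v :: "nat list" and h g :: nat
  assumes "distinct v" and "\<forall>x\<in>set v. 0 < x"
    and "avoids v [3,1,4,2,5]" and "avoids v [3,2,4,1,5]"
    and "avoids v [3,1,5,2,4]" and "avoids v [3,2,5,1,4]"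
    and "h = card (ltr_pos v)" and "g = card (rtl_pos v)"
    and "h > 1" and "g > 1" and "apos v h > h"
    and "letter v (apos v (h - 1)) < letter v (bpos v 2)"
  shows "let A1 = (apos v h = apos v (h - 1) + 1);
             A2 = (apos v h > apos v (h - 1) + 1 \<and> bpos v 2 = apos v h + 1);
             A3 = (apos v h > apos v (h - 1) + 1 \<and> bpos v 2 > apos v h + 1 \<and>
                   (\<forall>j. apos v h < j \<and> j < bpos v 2 \<longrightarrow> letter v j > letter v (apos v (h - 1))))
         in (A1 \<and> \<not> A2 \<and> \<not> A3) \<or> (\<not> A1 \<and> A2 \<and> \<not> A3) \<or> (\<not> A1 \<and> \<not> A2 \<and> A3)"
proof -
  define n where "n = length v"
  define L where "L = sorted_list_of_set (ltr_pos v)"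
  define R where "R = sorted_list_of_set (rtl_pos v)"
  have finL: "finite (ltr_pos v)" unfolding ltr_pos_def by (rule finite_subset[of _ "{..length v}"]) auto
  have finR: "finite (rtl_pos v)" unfolding rtl_pos_def by (rule finite_subset[of _ "{..length v}"]) auto
  have lenL: "length L = h" using assms(7) finL unfolding L_def by simp
  have lenR: "length R = g" using assms(8) finR unfolding R_def by simp
  have setL: "set L = ltr_pos v" using finL unfolding L_def by simp
  have setR: "set R = rtl_pos v" using finR unfolding R_def by simp
  have sL: "sorted_wrt (<) L" unfolding L_def by simp
  have sR: "sorted_wrt (<) R" unfolding R_def by simp
  define a1 where "a1 = L ! (h - 2)"
  define ah where "ah = L ! (h - 1)"
  define b2 where "b2 = R ! 1"
  define b1 where "b1 = R ! 0"
  have a1_eq: "apos v (h - 1) = a1" unfolding apos_def a1_def L_def by (simp add: numeral_eq_Suc)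
  have ah_eq: "apos v h = ah" unfolding apos_def ah_def L_def by simp
  have b2_eq: "bpos v 2 = b2" unfolding bpos_def b2_def R_def by simp
  have i1: "h - 2 < length L" "h - 1 < length L" "1 < length R" "0 < length R" using lenL lenR assms(9,10) by auto
  have a1L: "a1 \<in> ltr_pos v" using nth_mem[OF i1(1)] setL unfolding a1_def by simp
  have ahL: "ah \<in> ltr_pos v" using nth_mem[OF i1(2)] setL unfolding ah_def by simp
  have b2R: "b2 \<in> rtl_pos v" using nth_mem[OF i1(3)] setR unfolding b2_def by simp
  have b1R: "b1 \<in> rtl_pos v" using nth_mem[OF i1(4)] setR unfolding b1_def by simp
  have b12: "b1 < b2" using sorted_wrt_nth_less[OF sR _ i1(3), of 0] unfolding b1_def b2_def by simp
  have a1ah: "a1 < ah" using sorted_wrt_nth_less[OF sL _ i1(2), of "h-2"] assms(9) unfolding a1_def ah_def by simp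
  have Lbetween: "\<not> (a1 < p \<and> p < ah)" if "p \<in> ltr_pos v" for p
  proof
    assume p: "a1 < p \<and> p < ah"
    have "p \<in> set L" using that setL by simp
    then obtain k where k0: "k < length L" "L ! k = p" by (auto simp: in_set_conv_nth)
    then have k: "k < h" "L ! k = p" using lenL by auto
    show False
    proof (cases "k \<le> h - 2")
      case True
      then have "L ! k \<le> a1"
      proof (cases "k = h - 2")
        case False
        then have "k < h - 2" using True by simp
        then show ?thesis using sorted_wrt_nth_less[OF sL _ i1(1), of k] unfolding a1_def by simp
      qed (simp add: a1_def)
      then show False using p k by simp
    next
      case False
      then have "k = h - 1" using k by simp
      then show False using p k ah_def by simp
    qed
  qed
  have maxr: "letter v j < letter v ah" if "ah < j" "j \<le> n" for j
  proof (rule ccontr)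
    assume "\<not> ?thesis"
    then have ex: "\<exists>j. ah < j \<and> j \<le> n \<and> letter v ah \<le> letter v j" using that by auto
    define j0 where "j0 = (LEAST j. ah < j \<and> j \<le> n \<and> letter v ah \<le> letter v j)"
    have j0: "ah < j0 \<and> j0 \<le> n \<and> letter v ah \<le> letter v j0" unfolding j0_def using ex by (rule LeastI_ex)
    have j0min: "\<not> (ah < j \<and> j \<le> n \<and> letter v ah \<le> letter v j)" if "j < j0" for j
      using that unfolding j0_def using not_less_Least by blast
    have ahn: "1 \<le> ah" "ah \<le> n" using ahL unfolding ltr_pos_def n_def by auto
    have neq: "letter v ah \<noteq> letter v j0" using distinct_letter[OF assms(1), of ah j0] j0 ahn n_def by simp
    have "j0 \<in> ltr_pos v" unfolding ltr_pos_def
    proof (intro CollectI conjI allI impI)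
      show "1 \<le> j0" "j0 \<le> length v" using j0 ahn n_def by auto
      fix j assume jj: "1 \<le> j \<and> j < j0"
      show "letter v j < letter v j0"
      proof (cases "j < ah")
        case True then have "letter v j < letter v ah" using ahL jj unfolding ltr_pos_def by auto
        then show ?thesis using j0 by simp
      next
        case False
        show ?thesis
        proof (cases "j = ah")
          case True then show ?thesis using j0 neq by simp
        next
          case False
          with \<open>\<not> j < ah\<close> jj j0min[of j] j0 have "letter v j < letter v ah" by auto
          then show ?thesis using j0 by simp
        qed
      qed
    qed
    then have "j0 \<in> set L" using setL by simp
    then obtain k where k0: "k < length L" "L ! k = j0" by (auto simp: in_set_conv_nth)
    then have k: "k < h" "L ! k = j0" using lenL by auto
    have "L ! k \<le> ah"
    proof (cases "k = h - 1")
      case False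
      then have "k < h - 1" using k by simp
      then show ?thesis using sorted_wrt_nth_less[OF sL _ i1(2), of k] unfolding ah_def by simp
    qed (simp add: ah_def)
    then show False using k j0 by simp
  qed
  have ahn: "1 \<le> ah" "ah \<le> n" using ahL unfolding ltr_pos_def n_def by auto
  have b1ge: "ah \<le> b1"
  proof (rule ccontr)
    assume "\<not> ah \<le> b1"
    then have "letter v ah < letter v b1" using b1R ahn unfolding rtl_pos_def n_def by auto
    moreover have "letter v b1 < letter v ah" using \<open>\<not> ah \<le> b1\<close> ahL b1R unfolding ltr_pos_def rtl_pos_def by auto
    ultimately show False by simp
  qed
  have b2gt: "ah < b2" using b1ge b12 by simp
  have b2n: "b2 \<le> n" using b2R unfolding rtl_pos_def n_def by auto
  have vb2: "letter v b2 < letter v ah" using maxr b2gt b2n by simp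
  have a1n: "1 \<le> a1" using a1L unfolding ltr_pos_def by auto
  show ?thesis
    unfolding a1_eq ah_eq b2_eq Let_def
  proof -
    have main: "letter v j > letter v a1" if c1: "ah > a1 + 1" and c2: "ah < j" "j < b2" for j
    proof (rule ccontr)
      assume "\<not> ?thesis"
      define p where "p = a1 + 1"
      have "p \<notin> ltr_pos v" using Lbetween[of p] c1 p_def by auto
      moreover have "1 \<le> p" "p \<le> length v" using p_def c1 ahn n_def by auto
      ultimately obtain q where q: "1 \<le> q" "q < p" "\<not> letter v q < letter v p" unfolding ltr_pos_def by auto
      have "letter v q \<le> letter v a1"
      proof (cases "q = a1")
        case False then have "q < a1" using q p_def by simp
        then show ?thesis using a1L q unfolding ltr_pos_def by auto
      qed simp
      moreover have "letter v q \<noteq> letter v p" using distinct_letter[OF assms(1), of q p] q \<open>p \<le> length v\<close> by simp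
      ultimately have vp: "letter v p < letter v a1" using q by simp
      have jn: "j \<le> n" using c2 b2n by simp
      have "letter v j \<noteq> letter v a1" using distinct_letter[OF assms(1), of j a1] c2 a1n jn ahn n_def a1ah by simp
      then have vj: "letter v j < letter v a1" using \<open>\<not> letter v a1 < letter v j\<close> by simp
      have "letter v j \<noteq> letter v p" using distinct_letter[OF assms(1), of j p] c2 c1 jn n_def p_def by simp
      have ord: "a1 < p" "p < ah" "ah < j" "j < b2" "b2 \<le> length v" using p_def c1 c2 b2n n_def by auto
      show False
      proof (cases "letter v p < letter v j")
        case True
        have "contains v [3,1,5,2,4]"
          by (rule pat[OF a1n ord]) (use True vj assms(12) vb2 a1_eq b2_eq in auto)
        then show False using assms(5) unfolding avoids_def by simp
      next
        case False
        then have "letter v j < letter v p" using \<open>letter v j \<noteq> letter v p\<close> by simp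
        have "contains v [3,2,5,1,4]"
          by (rule pat2[OF a1n ord]) (use \<open>letter v j < letter v p\<close> vp assms(12) vb2 a1_eq b2_eq in auto)
        then show False using assms(6) unfolding avoids_def by simp
      qed
    qed
    show "(ah = a1 + 1 \<and> \<not> (a1 + 1 < ah \<and> b2 = ah + 1) \<and> \<not> (a1 + 1 < ah \<and> ah + 1 < b2 \<and> (\<forall>j. ah < j \<and> j < b2 \<longrightarrow> letter v a1 < letter v j))) \<or>
    (ah \<noteq> a1 + 1 \<and> (a1 + 1 < ah \<and> b2 = ah + 1) \<and> \<not> (a1 + 1 < ah \<and> ah + 1 < b2 \<and> (\<forall>j. ah < j \<and> j < b2 \<longrightarrow> letter v a1 < letter v j))) \<or>
    (ah \<noteq> a1 + 1 \<and> \<not> (a1 + 1 < ah \<and> b2 = ah + 1) \<and> a1 + 1 < ah \<and> ah + 1 < b2 \<and> (\<forall>j. ah < j \<and> j < b2 \<longrightarrow> letter v a1 < letter v j))"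
      using main a1ah b2gt by auto
  qed
qed

end
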